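(* There exist unitary matrices $A_n,B_n\in\mathrm U(6n)$, $n\in\mathbb N$, such that $\|B_n^{-1}A_n^2B_n-A_n^3\|_{\mathrm{Frob}}=O_{\mathcal U}(1/n)$ and $\|A_nB_n^{-1}A_nB_n-B_n^{-1}A_nB_nA_n\|_{\mathrm{Frob}}=\sqrt{6n}-O_{\mathcal U}(1)$.
   Context: $\|T\|_{\mathrm{Frob}}=\sqrt{\sum_{i,j}|T_{ij}|^2}$. Fix a non-principal ultrafilter $\mathcal U$ on $\mathbb N$. For sequences of non-negative reals, $x_n=O_{\mathcal U}(y_n)$ means there is $C>0$ with $\{n: x_n\le Cy_n\}\in\mathcal U$; "$x_n=\sqrt{6n}-O_{\mathcal U}(1)$" means $|x_n-\sqrt{6n}|=O_{\mathcal U}(1)$ in this sense. *)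

theory Defs
  imports Complex_Main "Jordan_Normal_Form.Matrix"
begin

definition cadj :: "complex mat \<Rightarrow> complex mat" where
  "cadj A = mat (dim_col A) (dim_row A) (\<lambda>(i,j). cnj (A $$ (j,i)))"

definition unitary_mat :: "nat \<Rightarrow> complex mat \<Rightarrow> bool" where
  "unitary_mat k U \<longleftrightarrow> U \<in> carrier_mat k k \<and> U * cadj U = 1\<^sub>m k \<and> cadj U * U = 1\<^sub>m k"

definition mat_inv :: "complex mat \<Rightarrow> complex mat" where
  "mat_inv B = (THE C. C \<in> carrier_mat (dim_row B) (dim_row B) \<and> inverts_mat B C \<and> inverts_mat C B)"

definition frob :: "complex mat \<Rightarrow> real" where
  "frob T = sqrt (\<Sum>i<dim_row T. \<Sum>j<dim_col T. (cmod (T $$ (i,j)))^2)"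

text \<open>Ultrafilters on nat, represented as Isabelle filters; membership of a set S
  in the ultrafilter U is  eventually (\<lambda>n. n \<in> S) U.\<close>
definition is_ultrafilter :: "nat filter \<Rightarrow> bool" where
  "is_ultrafilter U \<longleftrightarrow> U \<noteq> bot \<and> (\<forall>P. eventually P U \<or> eventually (\<lambda>n. \<not> P n) U)"

definition nonprincipal :: "nat filter \<Rightarrow> bool" where
  "nonprincipal U \<longleftrightarrow> (\<forall>m. U \<noteq> principal {m})"

definition bigO_U :: "nat filter \<Rightarrow> (nat \<Rightarrow> real) \<Rightarrow> (nat \<Rightarrow> real) \<Rightarrow> bool" where
  "bigO_U U x y \<longleftrightarrow> (\<exists>C>0. eventually (\<lambda>n. x n \<le> C * y n) U)"

end

theory Submission
  imports Defs "Jordan_Normal_Form.Determinant" "HOL-Real_Asymp.Real_Asymp"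
begin


definition sp :: "nat \<Rightarrow> (nat \<Rightarrow> nat) \<Rightarrow> (nat \<Rightarrow> complex) \<Rightarrow> (nat \<Rightarrow> complex) \<Rightarrow> complex mat" where
  "sp N p d f = mat N N (\<lambda>(i,k). if k = i then d i else if k = p i then f i else 0)"

definition pinv :: "nat \<Rightarrow> (nat \<Rightarrow> nat) \<Rightarrow> bool" where
  "pinv N p \<longleftrightarrow> (\<forall>i<N. p i < N \<and> p (p i) = i)"

definition okf :: "nat \<Rightarrow> (nat \<Rightarrow> nat) \<Rightarrow> (nat \<Rightarrow> complex) \<Rightarrow> bool" where
  "okf N p f \<longleftrightarrow> (\<forall>i<N. p i = i \<longrightarrow> f i = 0)"

lemma sp_carrier[simp]: "sp N p d f \<in> carrier_mat N N"
  by (simp add: sp_def)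

lemma sp_dims[simp]: "dim_row (sp N p d f) = N" "dim_col (sp N p d f) = N"
  by (simp_all add: sp_def)

lemma sp_index: "i < N \<Longrightarrow> k < N \<Longrightarrow> sp N p d f $$ (i,k) = (if k = i then d i else if k = p i then f i else 0)"
  by (simp add: sp_def)

lemma sum_two:
  fixes f :: "nat \<Rightarrow> complex"
  assumes "i < N" "j < N" "i \<noteq> j" "\<And>l. l < N \<Longrightarrow> l \<noteq> i \<Longrightarrow> l \<noteq> j \<Longrightarrow> f l = 0"
  shows "(\<Sum>l\<in>{0..<N}. f l) = f i + f j"
proof -
  have "(\<Sum>l\<in>{0..<N}. f l) = (\<Sum>l\<in>{i,j}. f l)"
    by (rule sum.mono_neutral_right) (use assms in auto)
  also have "\<dots> = f i + f j" using assms(3) by simp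
  finally show ?thesis .
qed

lemma sum_one:
  fixes f :: "nat \<Rightarrow> complex"
  assumes "i < N" "\<And>l. l < N \<Longrightarrow> l \<noteq> i \<Longrightarrow> f l = 0"
  shows "(\<Sum>l\<in>{0..<N}. f l) = f i"
proof -
  have "(\<Sum>l\<in>{0..<N}. f l) = (\<Sum>l\<in>{i}. f l)"
    by (rule sum.mono_neutral_right) (use assms in auto)
  then show ?thesis by simp
qed

lemma sp_mult:
  assumes P: "pinv N p" and f1: "okf N p f1" and f2: "okf N p f2"
  shows "sp N p d1 f1 * sp N p d2 f2 =
     sp N p (\<lambda>i. d1 i * d2 i + f1 i * f2 (p i)) (\<lambda>i. d1 i * f2 i + f1 i * d2 (p i))"
proof (rule eq_matI)
  fix i k assume ik: "i < dim_row (sp N p (\<lambda>i. d1 i * d2 i + f1 i * f2 (p i)) (\<lambda>i. d1 i * f2 i + f1 i * d2 (p i)))"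
     "k < dim_col (sp N p (\<lambda>i. d1 i * d2 i + f1 i * f2 (p i)) (\<lambda>i. d1 i * f2 i + f1 i * d2 (p i)))"
  then have i: "i < N" and k: "k < N" by auto
  have pi: "p i < N" "p (p i) = i" using P i by (auto simp: pinv_def)
  have "(sp N p d1 f1 * sp N p d2 f2) $$ (i,k) = (\<Sum>l\<in>{0..<N}. sp N p d1 f1 $$ (i,l) * sp N p d2 f2 $$ (l,k))"
    using i k by (simp add: scalar_prod_def)
  also have "\<dots> = (if k = i then d1 i * d2 i + f1 i * f2 (p i) else if k = p i then d1 i * f2 i + f1 i * d2 (p i) else 0)"
  proof (cases "p i = i")
    case True
    then have "f1 i = 0" "f2 i = 0" using f1 f2 i by (auto simp: okf_def)
    then have "(\<Sum>l\<in>{0..<N}. sp N p d1 f1 $$ (i,l) * sp N p d2 f2 $$ (l,k)) = sp N p d1 f1 $$ (i,i) * sp N p d2 f2 $$ (i,k)"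
      by (intro sum_one) (use i True in \<open>auto simp: sp_index\<close>)
    then show ?thesis using i k True \<open>f1 i = 0\<close> \<open>f2 i = 0\<close> by (auto simp: sp_index)
  next
    case False
    then have "(\<Sum>l\<in>{0..<N}. sp N p d1 f1 $$ (i,l) * sp N p d2 f2 $$ (l,k)) = sp N p d1 f1 $$ (i,i) * sp N p d2 f2 $$ (i,k) + sp N p d1 f1 $$ (i,p i) * sp N p d2 f2 $$ (p i,k)"
      by (intro sum_two) (use i pi in \<open>auto simp: sp_index\<close>)
    then show ?thesis using i k False pi by (auto simp: sp_index)
  qed
  also have "\<dots> = sp N p (\<lambda>i. d1 i * d2 i + f1 i * f2 (p i)) (\<lambda>i. d1 i * f2 i + f1 i * d2 (p i)) $$ (i,k)"
    using i k by (simp add: sp_index)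
  finally show "(sp N p d1 f1 * sp N p d2 f2) $$ (i,k) = sp N p (\<lambda>i. d1 i * d2 i + f1 i * f2 (p i)) (\<lambda>i. d1 i * f2 i + f1 i * d2 (p i)) $$ (i,k)" .
qed auto

lemma sp_minus: "sp N p d1 f1 - sp N p d2 f2 = sp N p (\<lambda>i. d1 i - d2 i) (\<lambda>i. f1 i - f2 i)"
  by (rule eq_matI) (auto simp: sp_index)

lemma sp_cong: "(\<And>i. i < N \<Longrightarrow> d i = d' i) \<Longrightarrow> (\<And>i. i < N \<Longrightarrow> p i \<noteq> i \<Longrightarrow> f i = f' i) \<Longrightarrow> sp N p d f = sp N p d' f'"
  by (rule eq_matI) (auto simp: sp_index)

lemma cadj_sp: assumes "pinv N p" shows "cadj (sp N p d f) = sp N p (\<lambda>i. cnj (d i)) (\<lambda>i. cnj (f (p i)))"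
  using assms unfolding cadj_def pinv_def by (intro eq_matI) (auto simp: sp_index)

lemma frob_sp: assumes P: "pinv N p" and o: "okf N p f"
  shows "frob (sp N p d f) = sqrt (\<Sum>i<N. (cmod (d i))^2 + (cmod (f i))^2)"
proof -
  have "(\<Sum>k<N. (cmod (sp N p d f $$ (i,k)))^2) = (cmod (d i))^2 + (cmod (f i))^2" if i: "i < N" for i
  proof -
    have pi: "p i < N" using P i by (auto simp: pinv_def)
    show ?thesis
    proof (cases "p i = i")
      case True
      then have "f i = 0" using o i by (auto simp: okf_def)
      have "(\<Sum>k<N. (cmod (sp N p d f $$ (i,k)))^2) = (\<Sum>k\<in>{i}. (cmod (sp N p d f $$ (i,k)))^2)"
        by (rule sum.mono_neutral_right) (use i True in \<open>auto simp: sp_index\<close>)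
      then show ?thesis using i \<open>f i = 0\<close> by (simp add: sp_index)
    next
      case False
      have "(\<Sum>k<N. (cmod (sp N p d f $$ (i,k)))^2) = (\<Sum>k\<in>{i, p i}. (cmod (sp N p d f $$ (i,k)))^2)"
        by (rule sum.mono_neutral_right) (use i pi False in \<open>auto simp: sp_index\<close>)
      then show ?thesis using i pi False by (simp add: sp_index)
    qed
  qed
  then show ?thesis unfolding frob_def by simp
qed

definition dg :: "nat \<Rightarrow> (nat \<Rightarrow> complex) \<Rightarrow> complex mat" where
  "dg N d = mat N N (\<lambda>(i,k). if k = i then d i else 0)"

lemma dg_sp: "dg N d = sp N p d (\<lambda>_. 0)"
  by (rule eq_matI) (auto simp: dg_def sp_index)

lemma okf_zero[simp]: "okf N p (\<lambda>_. 0)" by (simp add: okf_def)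

lemma dg_carrier[simp]: "dg N d \<in> carrier_mat N N" by (simp add: dg_def)

definition pm :: "nat \<Rightarrow> (nat \<Rightarrow> nat) \<Rightarrow> complex mat" where
  "pm N s = mat N N (\<lambda>(i,k). if i = s k then 1 else 0)"
definition pmt :: "nat \<Rightarrow> (nat \<Rightarrow> nat) \<Rightarrow> complex mat" where
  "pmt N s = mat N N (\<lambda>(i,k). if k = s i then 1 else 0)"

lemma pm_carrier[simp]: "pm N s \<in> carrier_mat N N" "pmt N s \<in> carrier_mat N N"
  by (simp_all add: pm_def pmt_def)

lemma cadj_pm: "cadj (pm N s) = pmt N s"
  by (rule eq_matI) (auto simp: cadj_def pm_def pmt_def)

lemma pmt_dg: assumes "\<And>i. i < N \<Longrightarrow> s i < N" and "inj_on s {0..<N}"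
  shows "pmt N s * dg N d = mat N N (\<lambda>(i,k). if k = s i then d (s i) else 0)"
proof (rule eq_matI)
  fix i k assume "i < dim_row (mat N N (\<lambda>(i,k). if k = s i then d (s i) else 0))" "k < dim_col (mat N N (\<lambda>(i,k). if k = s i then d (s i) else 0))"
  then have i: "i < N" and k: "k < N" by auto
  have "(pmt N s * dg N d) $$ (i,k) = (\<Sum>l\<in>{0..<N}. pmt N s $$ (i,l) * dg N d $$ (l,k))"
    using i k by (simp add: scalar_prod_def pmt_def dg_def)
  also have "\<dots> = pmt N s $$ (i, s i) * dg N d $$ (s i,k)"
    by (rule sum_one) (use i k assms in \<open>auto simp: pmt_def\<close>)
  finally show "(pmt N s * dg N d) $$ (i,k) = mat N N (\<lambda>(i,k). if k = s i then d (s i) else 0) $$ (i,k)"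
    using i k assms by (auto simp: pmt_def dg_def)
qed (auto simp: pmt_def dg_def)

lemma pmt_dg_pm: assumes "\<And>i. i < N \<Longrightarrow> s i < N" and "inj_on s {0..<N}"
  shows "pmt N s * dg N d * pm N s = dg N (\<lambda>i. d (s i))"
proof (rule eq_matI)
  fix i k assume "i < dim_row (dg N (\<lambda>i. d (s i)))" "k < dim_col (dg N (\<lambda>i. d (s i)))"
  then have i: "i < N" and k: "k < N" by (auto simp: dg_def)
  have "(pmt N s * dg N d * pm N s) $$ (i,k) = (\<Sum>l\<in>{0..<N}. (if l = s i then d (s i) else 0) * pm N s $$ (l,k))"
    using i k by (simp add: scalar_prod_def pmt_dg[OF assms] pm_def)
  also have "\<dots> = (if s i = s k then d (s i) else 0)"
    by (subst sum_one[where i="s i"]) (use i k assms in \<open>auto simp: pm_def\<close>)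
  also have "\<dots> = dg N (\<lambda>i. d (s i)) $$ (i,k)"
    using i k assms(2) by (auto simp: dg_def inj_on_def)
  finally show "(pmt N s * dg N d * pm N s) $$ (i,k) = dg N (\<lambda>i. d (s i)) $$ (i,k)" .
qed (auto simp: dg_def pm_def pmt_def)

lemma pmt_pm: assumes "\<And>i. i < N \<Longrightarrow> s i < N" and "inj_on s {0..<N}"
  shows "pmt N s * pm N s = 1\<^sub>m N"
proof -
  have "1\<^sub>m N = dg N (\<lambda>_. 1)" by (rule eq_matI) (auto simp: dg_def)
  moreover have "pmt N s * dg N (\<lambda>_. 1) * pm N s = pmt N s * pm N s"
  proof -
    have "pmt N s * dg N (\<lambda>_. 1) = pmt N s" using \<open>1\<^sub>m N = _\<close>[symmetric] right_mult_one_mat[of "pmt N s" N N] by simp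
    then show ?thesis by simp
  qed
  ultimately show ?thesis using pmt_dg_pm[OF assms, of "\<lambda>_. 1"] by simp
qed

lemma cadj_mult: assumes "X \<in> carrier_mat a b" "Y \<in> carrier_mat b c"
  shows "cadj (X * Y) = cadj Y * cadj X"
  using assms by (intro eq_matI) (auto simp: cadj_def scalar_prod_def mult.commute)

lemma cadj_carrier[simp]: "X \<in> carrier_mat a b \<Longrightarrow> cadj X \<in> carrier_mat b a"
  by (auto simp: cadj_def)

lemma mat_inv_eq: assumes B: "B \<in> carrier_mat N N" and C: "C \<in> carrier_mat N N"
  and BC: "B * C = 1\<^sub>m N" and CB: "C * B = 1\<^sub>m N"
  shows "mat_inv B = C"
  unfolding mat_inv_def
proof (rule the_equality)
  show "C \<in> carrier_mat (dim_row B) (dim_row B) \<and> inverts_mat B C \<and> inverts_mat C B"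
    using assms by (auto simp: inverts_mat_def)
next
  fix C' assume h: "C' \<in> carrier_mat (dim_row B) (dim_row B) \<and> inverts_mat B C' \<and> inverts_mat C' B"
  then have C': "C' \<in> carrier_mat N N" and C'B: "C' * B = 1\<^sub>m N" using B by (auto simp: inverts_mat_def)
  have "C' = C' * (B * C)" using C' BC by simp
  also have "\<dots> = (C' * B) * C" using C' B C by simp
  also have "\<dots> = C" using C'B C by simp
  finally show "C' = C" .
qed




locale cb = fixes L :: nat assumes L2: "2 \<le> L"
begin

definition q :: int where "q = 3^L - 2^L"
definition h :: int where "h = (q + 1) div 2"
definition g0 :: int where "g0 = (if q mod 3 = 2 then (q + 1) div 3 else (2*q + 1) div 3)"
definition gg :: "nat \<Rightarrow> int" where "gg m = g0 * 3^m * h^m"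
definition D :: nat where "D = L * 2^L"

lemma q_pos: "q > 0"
proof -
  have "(2::int)^L < 3^L" using L2 by (intro power_strict_mono) auto
  then show ?thesis by (simp add: q_def)
qed

lemma q_odd: "odd q"
  using L2 by (simp add: q_def)

lemma h2: "2*h = q + 1"
proof -
  have "(2::int) dvd q + 1" using q_odd by simp
  then show ?thesis unfolding h_def by (rule dvd_mult_div_cancel)
qed

lemma pow2_mod3: "(2::int)^n mod 3 = 1 \<or> (2::int)^n mod 3 = 2"
proof (induction n)
  case 0 then show ?case by simp
next
  case (Suc n)
  have "(2::int)^Suc n mod 3 = (2 * ((2::int)^n mod 3)) mod 3" by (simp add: mod_mult_right_eq)
  with Suc show ?case by auto
qed

lemma q_mod3: "q mod 3 = 1 \<or> q mod 3 = 2"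
proof -
  have LL: "L = Suc (L-1)" using L2 by simp
  have e: "(3::int)^L = 3 * 3^(L-1)" by (subst LL) simp
  have "q = (- (2^L)) + 3^(L-1) * 3" by (simp add: q_def e)
  then have A: "q mod 3 = (- (2^L)) mod 3" by (simp only: mod_mult_self1)
  have B: "(- ((2::int)^L)) mod 3 = (- ((2::int)^L mod 3)) mod 3" by (simp only: mod_minus_eq)
  show ?thesis using pow2_mod3[of L] A B by auto
qed

lemma g0_3: "3*g0 = q + 1 \<or> 3*g0 = 2*q + 1"
proof (cases "q mod 3 = 2")
  case True
  then have "(3::int) dvd q + 1" by presburger
  then have "3 * ((q+1) div 3) = q + 1" by simp
  then show ?thesis using True unfolding g0_def by simp
next
  case False
  then have "q mod 3 = 1" using q_mod3 by simp
  then have "(3::int) dvd 2*q + 1" by presburger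
  then have "3 * ((2*q+1) div 3) = 2*q + 1" by simp
  then show ?thesis using False unfolding g0_def by simp
qed

lemma g0_cong: "q dvd 3*g0 - 1"
  using g0_3 by auto

lemma gg_step: "m + 1 < L \<Longrightarrow> q dvd 2 * gg (m+1) - 3 * gg m"
proof -
  assume "m + 1 < L"
  have "2 * gg (m+1) - 3 * gg m = g0 * 3^(m+1) * h^m * (2*h - 1)"
    by (simp add: gg_def algebra_simps)
  also have "\<dots> = g0 * 3^(m+1) * h^m * q" using h2 by simp
  finally show ?thesis by simp
qed

lemma gg_wrap: "q dvd 2 * gg 0 - 3 * gg (L - 1)"
proof -
  have L1: "L = Suc (L - 1)" using L2 by simp
  have e: "(3::int)^L = q + 2^L" by (simp add: q_def)
  have "3 * gg (L-1) = g0 * 3^L * h^(L-1)"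
    by (subst (2) L1) (simp add: gg_def algebra_simps)
  also have "\<dots> = g0 * (q * h^(L-1) + 2 * (2*h)^(L-1))"
    by (subst e, subst (2) L1) (simp add: algebra_simps power_mult_distrib)
  finally have a: "3 * gg (L-1) = g0 * (q * h^(L-1) + 2 * (q+1)^(L-1))" using h2 by simp
  have b: "q dvd (q+1)^n - 1" for n
  proof (induction n)
    case 0 then show ?case by simp
  next
    case (Suc n)
    have "(q+1)^Suc n - 1 = (q+1) * ((q+1)^n - 1) + q" by (simp add: algebra_simps)
    then show ?case using Suc by simp
  qed
  have "2 * gg 0 - 3 * gg (L - 1) = - g0 * (q * h^(L-1) + 2 * ((q+1)^(L-1) - 1))"
    using a by (simp add: gg_def algebra_simps)
  moreover have "q dvd - g0 * (q * h^(L-1) + 2 * ((q+1)^(L-1) - 1))"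
    by (intro dvd_mult dvd_add dvd_mult2 b) simp
  ultimately show ?thesis by simp
qed

lemma gg_rel: "m < L \<Longrightarrow> q dvd 2 * gg ((m+1) mod L) - 3 * gg m"
proof -
  assume m: "m < L"
  show ?thesis
  proof (cases "m + 1 < L")
    case True then show ?thesis using gg_step by simp
  next
    case False
    then have "m = L - 1" "m + 1 = L" using m by auto
    then have "m = L - 1" "(m+1) mod L = 0" by auto
    then show ?thesis using gg_wrap by simp
  qed
qed

lemma gg1: "q dvd gg 1 - h"
proof -
  have "gg 1 - h = g0 * 3 * h - h" by (simp add: gg_def)
  have "2 * (gg 1 - h) = (3*g0 - 1) * (2*h)"
    by (simp add: gg_def algebra_simps)
  then have "2 * (gg 1 - h) = (3*g0 - 1) * (q + 1)" using h2 by simp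
  then have "q dvd 2 * (gg 1 - h)" using g0_cong by simp
  then show ?thesis using q_odd coprime_dvd_mult_right_iff[of q 2 "gg 1 - h"] by simp
qed

end



lemma sum_one_gen:
  fixes f :: "nat \<Rightarrow> 'a::comm_monoid_add"
  assumes "i \<in> A" "finite A" "\<And>l. l \<in> A \<Longrightarrow> l \<noteq> i \<Longrightarrow> f l = 0"
  shows "(\<Sum>l\<in>A. f l) = f i"
proof -
  have "(\<Sum>l\<in>A. f l) = (\<Sum>l\<in>{i}. f l)"
    by (rule sum.mono_neutral_right) (use assms in auto)
  then show ?thesis by simp
qed

context cb
begin

definition bv :: "nat \<Rightarrow> nat \<Rightarrow> int" where "bv s k = (if bit s k then 1 else 0)"
definition vv :: "nat \<Rightarrow> int" where
  "vv i = (if i < D then (\<Sum>k<L. bv (i div L) k * gg ((i mod L + L - k) mod L)) else 0)"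
definition sg :: "nat \<Rightarrow> nat" where
  "sg i = (if i < D then (i div L) * L + (i mod L + 1) mod L else i)"
definition pp :: "nat \<Rightarrow> nat" where
  "pp i = (if i < D then flip_bit (i mod L) (i div L) * L + i mod L else i)"
definition sgnb :: "nat \<Rightarrow> int" where
  "sgnb i = (if bit (i div L) (i mod L) then -1 else 1)"

lemma L0: "0 < L" using L2 by simp

lemma enc_lt: "s < 2^L \<Longrightarrow> r < L \<Longrightarrow> s * L + r < D"
proof -
  assume "s < 2^L" "r < L"
  then have "s * L + r < (s+1) * L" by simp
  also have "\<dots> \<le> 2^L * L" using \<open>s < 2^L\<close> by (intro mult_right_mono) auto
  finally show ?thesis by (simp add: D_def mult.commute)
qed

lemma dec: "i < D \<Longrightarrow> i div L < 2^L \<and> i mod L < L"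
  using L0 by (auto simp: D_def less_mult_imp_div_less mult.commute)

lemma enc_div[simp]: "r < L \<Longrightarrow> (s * L + r) div L = s"
  using L0 by simp
lemma enc_mod[simp]: "r < L \<Longrightarrow> (s * L + r) mod L = r"
  using L0 by simp

lemma flip_lt: "(s::nat) < 2^L \<Longrightarrow> j < L \<Longrightarrow> flip_bit j s < 2^L"
proof -
  assume "s < 2^L" "j < L"
  then have "take_bit L s = s" by (simp add: take_bit_nat_eq_self_iff)
  then have "take_bit L (flip_bit j s) = flip_bit j s"
    using \<open>j < L\<close> by (simp add: take_bit_flip_bit_eq)
  then show ?thesis by (simp add: take_bit_nat_eq_self_iff)
qed

lemma sg_lt: "i < D \<Longrightarrow> sg i < D"
  using dec[of i] L0 by (auto simp: sg_def intro!: enc_lt)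

lemma pp_lt: "i < D \<Longrightarrow> pp i < D"
  using dec[of i] by (auto simp: pp_def intro!: enc_lt flip_lt)

lemma pp_pp: "i < D \<Longrightarrow> pp (pp i) = i"
proof -
  assume i: "i < D"
  note d = dec[OF i]
  have "pp (pp i) = flip_bit (i mod L) (flip_bit (i mod L) (i div L)) * L + i mod L"
    using pp_lt[OF i] d by (simp add: pp_def i)
  also have "flip_bit (i mod L) (flip_bit (i mod L) (i div L)) = i div L"
    by (rule bit_eqI) (auto simp: bit_flip_bit_iff)
  finally show ?thesis by simp
qed

lemma pp_neq: "i < D \<Longrightarrow> pp i \<noteq> i"
proof
  assume i: "i < D" and e: "pp i = i"
  note d = dec[OF i]
  have "pp i div L = flip_bit (i mod L) (i div L)" using d by (simp add: pp_def i)
  then have "flip_bit (i mod L) (i div L) = i div L" using e by simp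
  then have "bit (flip_bit (i mod L) (i div L)) (i mod L) = bit (i div L) (i mod L)" by simp
  then show False by (simp add: bit_flip_bit_iff)
qed

lemma pinv_pp: "D \<le> N \<Longrightarrow> pinv N pp"
  unfolding pinv_def
proof (intro allI impI conjI)
  fix i assume "D \<le> N" "i < N"
  then show "pp i < N" using pp_lt[of i] by (cases "i < D") (auto simp: pp_def)
  show "pp (pp i) = i" using pp_pp[of i] by (cases "i < D") (auto simp: pp_def)
qed

lemma modS: "j < L \<Longrightarrow> (j+1) mod L = (if j + 1 = L then 0 else j+1)"
proof -
  assume j: "j < L"
  show ?thesis
  proof (cases "j + 1 = L")
    case True
    then show ?thesis by simp
  next
    case False
    then have "j + 1 < L" using j by linarith
    then show ?thesis using False by (simp only: mod_less if_False)
  qed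
qed

lemma sg_mod_inj: "j < L \<Longrightarrow> j' < L \<Longrightarrow> (j+1) mod L = (j'+1) mod L \<Longrightarrow> j = j'"
  using modS[of j] modS[of j'] by (auto split: if_splits)

lemma sg_inj: "D \<le> N \<Longrightarrow> inj_on sg {0..<N}"
proof (rule inj_onI)
  fix i i' assume N: "D \<le> N" and "i \<in> {0..<N}" "i' \<in> {0..<N}" and e: "sg i = sg i'"
  show "i = i'"
  proof (cases "i < D"; cases "i' < D")
    assume i: "i < D" and i': "i' < D"
    note d = dec[OF i] and d' = dec[OF i']
    have m: "(i mod L + 1) mod L < L" "(i' mod L + 1) mod L < L" using L0 by auto
    have "sg i div L = i div L" "sg i' div L = i' div L" using i i' m by (simp_all add: sg_def)
    moreover have "sg i mod L = (i mod L + 1) mod L" "sg i' mod L = (i' mod L + 1) mod L"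
      using i i' m by (simp_all add: sg_def)
    ultimately have "i div L = i' div L" "i mod L = i' mod L"
      using e sg_mod_inj d d' by metis+
    then show ?thesis by (metis div_mult_mod_eq)
  next
    assume "i < D" "\<not> i' < D" then show ?thesis using e sg_lt[of i] by (simp add: sg_def)
  next
    assume "\<not> i < D" "i' < D" then show ?thesis using e sg_lt[of i'] by (simp add: sg_def)
  next
    assume "\<not> i < D" "\<not> i' < D" then show ?thesis using e by (simp add: sg_def)
  qed
qed

lemma sg_N: "D \<le> N \<Longrightarrow> i < N \<Longrightarrow> sg i < N"
  using sg_lt[of i] by (cases "i < D") (auto simp: sg_def)

lemma flip_sum:
  fixes f :: "nat \<Rightarrow> int"
  assumes "j < L"
  shows "(\<Sum>k<L. bv (flip_bit j s) k * f k) - (\<Sum>k<L. bv s k * f k) = (if bit s j then -1 else 1) * f j"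
proof -
  have "(\<Sum>k<L. bv (flip_bit j s) k * f k) - (\<Sum>k<L. bv s k * f k) = (\<Sum>k<L. (bv (flip_bit j s) k - bv s k) * f k)"
    by (simp add: sum_subtractf algebra_simps)
  also have "\<dots> = (bv (flip_bit j s) j - bv s j) * f j"
    by (rule sum_one_gen) (use assms in \<open>auto simp: bv_def bit_flip_bit_iff\<close>)
  also have "\<dots> = (if bit s j then -1 else 1) * f j"
    by (simp add: bv_def bit_flip_bit_iff)
  finally show ?thesis .
qed

lemma vv_pp: "i < D \<Longrightarrow> vv (pp i) - vv i = sgnb i * g0"
proof -
  assume i: "i < D"
  note d = dec[OF i]
  have "vv (pp i) = (\<Sum>k<L. bv (flip_bit (i mod L) (i div L)) k * gg ((i mod L + L - k) mod L))"
    using pp_lt[OF i] d by (simp add: vv_def pp_def i)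
  moreover have "vv i = (\<Sum>k<L. bv (i div L) k * gg ((i mod L + L - k) mod L))" by (simp add: vv_def i)
  ultimately have "vv (pp i) - vv i = (if bit (i div L) (i mod L) then -1 else 1) * gg ((i mod L + L - i mod L) mod L)"
    using flip_sum[of "i mod L" "i div L" "\<lambda>k. gg ((i mod L + L - k) mod L)"] d by simp
  then show ?thesis by (simp add: sgnb_def gg_def)
qed

lemma mod_one: "j < L \<Longrightarrow> ((j + 1) mod L + L - j) mod L = 1"
proof -
  assume j: "j < L"
  show ?thesis
  proof (cases "j + 1 < L")
    case True
    then have "(j + 1) mod L + L - j = L + 1" by simp
    moreover have "(L + 1) mod L = 1" using L2 mod_Suc_eq[of L L] by simp
    ultimately show ?thesis by simp
  next
    case False
    then have "j + 1 = L" using j by simp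
    then have "(j + 1) mod L + L - j = 1" by simp
    then show ?thesis using L2 by simp
  qed
qed

lemma vv_sg_pp: "i < D \<Longrightarrow> vv (sg (pp i)) - vv (sg i) = sgnb i * gg 1"
proof -
  assume i: "i < D"
  note d = dec[OF i]
  have m: "(i mod L + 1) mod L < L" using L0 by auto
  have "sg (pp i) = flip_bit (i mod L) (i div L) * L + (i mod L + 1) mod L"
    using pp_lt[OF i] d by (simp add: sg_def pp_def i)
  then have "vv (sg (pp i)) = (\<Sum>k<L. bv (flip_bit (i mod L) (i div L)) k * gg (((i mod L + 1) mod L + L - k) mod L))"
    using sg_lt[OF pp_lt[OF i]] m by (simp add: vv_def)
  moreover have "vv (sg i) = (\<Sum>k<L. bv (i div L) k * gg (((i mod L + 1) mod L + L - k) mod L))"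
    using sg_lt[OF i] m by (simp add: vv_def sg_def i)
  ultimately have "vv (sg (pp i)) - vv (sg i) = (if bit (i div L) (i mod L) then -1 else 1) * gg (((i mod L + 1) mod L + L - i mod L) mod L)"
    using flip_sum[of "i mod L" "i div L" "\<lambda>k. gg (((i mod L + 1) mod L + L - k) mod L)"] d by simp
  then show ?thesis using mod_one[of "i mod L"] d by (simp add: sgnb_def)
qed

lemma sgnb_pp: "i < D \<Longrightarrow> sgnb (pp i) = - sgnb i"
proof -
  assume i: "i < D"
  note d = dec[OF i]
  show ?thesis using d by (simp add: sgnb_def pp_def i bit_flip_bit_iff)
qed

lemma idx_shift: "j < L \<Longrightarrow> k < L \<Longrightarrow> ((j+1) mod L + L - k) mod L = ((j + L - k) mod L + 1) mod L"
proof -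
  assume j: "j < L" and k: "k < L"
  have "((j+1) mod L + L - k) mod L = ((j+1) mod L + (L - k)) mod L" using k by simp
  also have "\<dots> = ((j+1) + (L - k)) mod L" by (simp add: mod_add_left_eq)
  also have "\<dots> = ((j + (L - k)) + 1) mod L" by simp
  also have "\<dots> = ((j + (L - k)) mod L + 1) mod L" by (simp add: mod_Suc_eq)
  also have "j + (L - k) = j + L - k" using k by simp
  finally show ?thesis .
qed

lemma vv_sg: "q dvd 2 * vv (sg i) - 3 * vv i"
proof (cases "i < D")
  case i: True
  note d = dec[OF i]
  have m: "(i mod L + 1) mod L < L" using L0 by auto
  have "2 * vv (sg i) - 3 * vv i = (\<Sum>k<L. bv (i div L) k * (2 * gg (((i mod L + L - k) mod L + 1) mod L) - 3 * gg ((i mod L + L - k) mod L)))"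
    using sg_lt[OF i] m d idx_shift
    by (simp add: vv_def sg_def i sum_distrib_left sum_subtractf algebra_simps)
  moreover have "q dvd \<dots>"
    by (intro dvd_sum dvd_mult gg_rel) (use L0 in simp)
  ultimately show ?thesis by simp
next
  case False then show ?thesis by (simp add: vv_def sg_def)
qed

end



lemma cis_cong:
  fixes x y q :: int
  assumes "q \<noteq> 0" "q dvd x - y"
  shows "cis (2 * pi * of_int x / of_int q) = cis (2 * pi * of_int y / of_int q)"
proof -
  obtain k where k: "x - y = q * k" using assms(2) by (auto simp: dvd_def)
  have "2 * pi * of_int x / of_int q = 2 * pi * of_int y / of_int q + 2 * pi * of_int k"
  proof -
    have "of_int x = of_int y + of_int q * (of_int k :: real)" using k by (simp add: algebra_simps flip: of_int_mult of_int_add)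
    then show ?thesis using assms(1) by (simp add: field_simps)
  qed
  then show ?thesis by (simp add: cis_mult[symmetric])
qed

lemma cmod_cis_diff: "(cmod (cis x - cis y))^2 = 2 - 2 * cos (x - y)"
proof -
  have "(cmod (cis x - cis y))^2 = (cos x - cos y)^2 + (sin x - sin y)^2"
    by (simp add: cmod_power2)
  also have "\<dots> = (cos x ^ 2 + sin x ^ 2) + (cos y ^ 2 + sin y ^ 2) - 2 * (cos x * cos y + sin x * sin y)"
    by (simp add: power2_eq_square algebra_simps)
  also have "\<dots> = 2 - 2 * cos (x - y)" by (simp add: cos_diff)
  finally show ?thesis .
qed

lemma one_minus_cos: "2 - 2 * cos x \<le> (x::real)^2"
proof -
  have "cos x = cos (2 * (x/2))" by simp
  then have "2 - 2 * cos x = 4 * (sin (x/2))^2" using cos_double_sin[of "x/2"] by simp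
  also have "\<dots> \<le> 4 * (x/2)^2"
  proof -
    have "\<bar>sin (x/2)\<bar> \<le> \<bar>x/2\<bar>" by (rule abs_sin_x_le_abs_x)
    then have "(sin (x/2))^2 \<le> (x/2)^2" by (metis abs_le_square_iff)
    then show ?thesis by simp
  qed
  finally show ?thesis by (simp add: power2_eq_square)
qed

lemma cs23: "cos (pi - pi/3) = -1/2" "sin (pi - pi/3) = sqrt 3 / 2"
  "cos (pi + pi/3) = -1/2" "sin (pi + pi/3) = - sqrt 3 / 2"
  by (simp_all only: cos_pi_minus sin_pi_minus cos_periodic_pi2 sin_periodic_pi2 cos_60 sin_60)

context cb
begin

definition a :: "nat \<Rightarrow> complex" where "a i = cis (2 * pi * of_int (vv i) / of_int q)"

lemma qne: "q \<noteq> 0" using q_pos by simp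

lemma cmod_a[simp]: "cmod (a i) = 1" by (simp add: a_def)

lemma a_pow: "a i ^ n = cis (2 * pi * of_int (int n * vv i) / of_int q)"
  by (simp add: a_def DeMoivre field_simps)

lemma a_sg: "a (sg i) ^ 2 = a i ^ 3"
proof -
  have "a (sg i) ^ 2 = cis (2 * pi * of_int (2 * vv (sg i)) / of_int q)" by (simp add: a_pow)
  also have "\<dots> = cis (2 * pi * of_int (3 * vv i) / of_int q)"
    by (rule cis_cong[OF qne]) (rule vv_sg)
  also have "\<dots> = a i ^ 3" by (simp add: a_pow)
  finally show ?thesis .
qed

lemma cos_cong:
  fixes x y :: int
  assumes "q dvd x - y"
  shows "cos (2 * pi * of_int x / of_int q) = cos (2 * pi * of_int y / of_int q)"
  using arg_cong[OF cis_cong[OF qne assms], of Re] by simp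

definition alpha :: real where "alpha = 2 - 2 * cos (2 * pi * of_int g0 / of_int q)"
definition beta :: real where "beta = 2 + 2 * cos (pi / of_int q)"

lemma sgnb_cases: "sgnb i = 1 \<or> sgnb i = -1" by (simp add: sgnb_def)

lemma a_pp: "i < D \<Longrightarrow> (cmod (a (pp i) - a i))^2 = alpha"
proof -
  assume i: "i < D"
  have "(cmod (a (pp i) - a i))^2 = 2 - 2 * cos (2 * pi * of_int (vv (pp i) - vv i) / of_int q)"
    by (simp add: a_def cmod_cis_diff diff_divide_distrib algebra_simps)
  also have "\<dots> = alpha" using vv_pp[OF i] sgnb_cases[of i] by (auto simp: alpha_def)
  finally show ?thesis .
qed

lemma a3_pp: "i < D \<Longrightarrow> (cmod (a (pp i) ^ 3 - a i ^ 3))^2 = 2 - 2 * cos (2 * pi / of_int q)"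
proof -
  assume i: "i < D"
  have "(cmod (a (pp i) ^ 3 - a i ^ 3))^2 = 2 - 2 * cos (2 * pi * of_int (3 * (vv (pp i) - vv i)) / of_int q)"
    by (simp add: a_pow cmod_cis_diff diff_divide_distrib algebra_simps)
  also have "cos (2 * pi * of_int (3 * (vv (pp i) - vv i)) / of_int q) = cos (2 * pi * of_int (3 * g0) / of_int q)"
    using vv_pp[OF i] sgnb_cases[of i] by auto
  also have "\<dots> = cos (2 * pi * of_int 1 / of_int q)"
    by (rule cos_cong) (rule g0_cong)
  finally show ?thesis by simp
qed

lemma a_sg_pp: "i < D \<Longrightarrow> (cmod (a (sg (pp i)) - a (sg i)))^2 = beta"
proof -
  assume i: "i < D"
  have "(cmod (a (sg (pp i)) - a (sg i)))^2 = 2 - 2 * cos (2 * pi * of_int (vv (sg (pp i)) - vv (sg i)) / of_int q)"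
    by (simp add: a_def cmod_cis_diff diff_divide_distrib algebra_simps)
  also have "cos (2 * pi * of_int (vv (sg (pp i)) - vv (sg i)) / of_int q) = cos (2 * pi * of_int (gg 1) / of_int q)"
    using vv_sg_pp[OF i] sgnb_cases[of i] by auto
  also have "\<dots> = cos (2 * pi * of_int h / of_int q)"
    by (rule cos_cong) (rule gg1)
  also have "2 * pi * of_int h / of_int q = pi + pi / of_int q"
  proof -
    have "2 * (of_int h :: real) = of_int q + 1" using h2 by (metis of_int_1 of_int_add of_int_mult of_int_numeral)
    then show ?thesis using qne by (simp add: field_simps)
  qed
  finally show ?thesis by (simp add: beta_def)
qed

lemma q_ge: "5 \<le> L \<Longrightarrow> 81 \<le> q"
proof -
  assume L5: "5 \<le> L"
  have LL: "L = Suc (L-1)" using L5 by simp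
  have "(2::int)^(L-1) \<le> 3^(L-1)" by (intro power_mono) auto
  moreover have "(3::int)^4 \<le> 3^(L-1)" using L5 by (intro power_increasing) auto
  moreover have "q = 3 * 3^(L-1) - 2 * 2^(L-1)" unfolding q_def by (subst (1 2) LL) simp
  ultimately show ?thesis by simp
qed

lemma alpha_ge: "5 \<le> L \<Longrightarrow> alpha \<ge> 2.8"
proof -
  assume L5: "5 \<le> L"
  have q81: "(81::real) \<le> of_int q" using q_ge[OF L5] by linarith
  define d where "d = 2 * pi / (3 * of_int q)"
  have d0: "0 \<le> d" using q_pos pi_gt_zero by (simp add: d_def)
  have d1: "d \<le> 0.05"
  proof -
    have "d \<le> 2 * 4 / (3 * 81)" unfolding d_def using q81 pi_less_4 pi_gt_zero
      by (intro frac_le) auto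
    then show ?thesis by simp
  qed
  have cd: "99/100 \<le> cos d"
  proof -
    have "2 - 2 * cos d \<le> d^2" by (rule one_minus_cos)
    moreover have "d^2 \<le> 0.0025" using d0 d1 mult_mono[of d "0.05" d "0.05"] by (simp add: power2_eq_square)
    ultimately show ?thesis by simp
  qed
  have sd: "0 \<le> sin d" "sin d \<le> 0.05"
    using sin_ge_zero[of d] d0 d1 pi_ge_two abs_sin_x_le_abs_x[of d] by auto
  have s3: "sqrt 3 \<le> 2"
  proof -
    have "sqrt 3 \<le> sqrt 4" by (rule real_sqrt_le_mono) simp
    then show ?thesis by (simp add: real_sqrt_four)
  qed
  have "cos (2 * pi * of_int g0 / of_int q) \<le> -0.4"
  proof (cases "3 * g0 = q + 1")
    case True
    then have "2 * pi * of_int g0 / of_int q = (pi - pi/3) + d"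
    proof -
      have "3 * (of_int g0 :: real) = of_int q + 1" using True by (metis of_int_1 of_int_add of_int_mult of_int_numeral)
      have "2*pi*of_int g0/of_int q = 2*pi*(3*of_int g0)/(3*of_int q)" by simp
      also have "\<dots> = 2*pi*(of_int q + 1)/(3*of_int q)" using \<open>3 * (of_int g0 :: real) = of_int q + 1\<close> by simp
      also have "\<dots> = (pi - pi/3) + d" using qne by (simp add: d_def field_simps)
      finally show ?thesis .
    qed
    then have "cos (2 * pi * of_int g0 / of_int q) = - (1/2) * cos d - (sqrt 3 / 2) * sin d"
      by (simp only: cos_add cs23)
    also have "\<dots> \<le> -0.4"
    proof -
      have "0 \<le> sqrt 3 / 2 * sin d" using sd(1) by simp
      then show ?thesis using cd by linarith
    qed
    finally show ?thesis .
  next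
    case False
    then have "3 * g0 = 2 * q + 1" using g0_3 by simp
    then have "2 * pi * of_int g0 / of_int q = (pi + pi/3) + d"
    proof -
      have "3 * (of_int g0 :: real) = 2 * of_int q + 1" using \<open>3 * g0 = 2 * q + 1\<close> by (metis of_int_1 of_int_add of_int_mult of_int_numeral)
      have "2*pi*of_int g0/of_int q = 2*pi*(3*of_int g0)/(3*of_int q)" by simp
      also have "\<dots> = 2*pi*(2 * of_int q + 1)/(3*of_int q)" using \<open>3 * (of_int g0 :: real) = 2 * of_int q + 1\<close> by simp
      also have "\<dots> = (pi + pi/3) + d" using qne by (simp add: d_def field_simps)
      finally show ?thesis .
    qed
    then have "cos (2 * pi * of_int g0 / of_int q) = - (1/2) * cos d + (sqrt 3 / 2) * sin d"
      by (simp only: cos_add cs23) (simp add: cos_60 sin_60)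
    also have "\<dots> \<le> -0.4"
    proof -
      have "(sqrt 3 / 2) * sin d \<le> 1 * (5/100)" using s3 sd by (intro mult_mono) auto
      then show ?thesis using cd by linarith
    qed
    finally show ?thesis .
  qed
  then show ?thesis by (simp add: alpha_def)
qed

lemma beta_ge: "5 \<le> L \<Longrightarrow> beta \<ge> 3.8"
proof -
  assume L5: "5 \<le> L"
  have q81: "(81::real) \<le> of_int q" using q_ge[OF L5] by linarith
  have d0: "0 \<le> pi / of_int q" using q_pos pi_gt_zero by simp
  have d1: "pi / of_int q \<le> 0.05"
  proof -
    have "pi / of_int q \<le> 4 / 81" using q81 pi_less_4 pi_gt_zero by (intro frac_le) auto
    then show ?thesis by simp
  qed
  have "2 - 2 * cos (pi / of_int q) \<le> (pi / of_int q)^2" by (rule one_minus_cos)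
  moreover have "(pi / of_int q)^2 \<le> 0.0025" using d0 d1 mult_mono[of "pi / of_int q" "0.05" "pi / of_int q" "0.05"] by (simp add: power2_eq_square)
  ultimately show ?thesis by (simp add: beta_def)
qed

lemma a3_small: "5 \<le> L \<Longrightarrow> 2 - 2 * cos (2 * pi / of_int q) \<le> (8 / of_int q)^2"
proof -
  assume L5: "5 \<le> L"
  have "2 - 2 * cos (2 * pi / of_int q) \<le> (2 * pi / of_int q)^2" by (rule one_minus_cos)
  also have "\<dots> \<le> (8 / of_int q)^2"
    using q_pos pi_less_4 pi_gt_zero by (intro power_mono frac_le divide_right_mono) auto
  finally show ?thesis .
qed

end



lemma one_sp: "1\<^sub>m N = sp N p (\<lambda>_. 1) (\<lambda>_. 0)"
  by (rule eq_matI) (auto simp: sp_index)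

lemma dg_mult: "dg N f * dg N g = dg N (\<lambda>i. f i * g i)"
proof -
  have "pinv N id" by (simp add: pinv_def)
  then show ?thesis by (simp add: dg_sp[where p = id] sp_mult)
qed

lemma cadj_dg: "cadj (dg N f) = dg N (\<lambda>i. cnj (f i))"
  by (rule eq_matI) (auto simp: cadj_def dg_def)

lemma sp_dg: "pinv N p \<Longrightarrow> okf N p f \<Longrightarrow> sp N p d f * dg N x = sp N p (\<lambda>i. d i * x i) (\<lambda>i. f i * x (p i))"
  by (simp add: dg_sp[where p = p] sp_mult)

lemma dg_sp_mult: "pinv N p \<Longrightarrow> okf N p f \<Longrightarrow> dg N x * sp N p d f = sp N p (\<lambda>i. x i * d i) (\<lambda>i. x i * f i)"
  by (simp add: dg_sp[where p = p] sp_mult)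

lemma cadj_cadj: "X \<in> carrier_mat r c \<Longrightarrow> cadj (cadj X) = X"
  by (rule eq_matI) (auto simp: cadj_def)

locale cb2 = cb + fixes N :: nat and cs sn :: real
  assumes DN: "D \<le> N" and cssn: "cs^2 + sn^2 = 1"
begin

lemma P: "pinv N pp" using pinv_pp[OF DN] .

definition oW :: "nat \<Rightarrow> complex" where "oW i = (if i < D then of_int (sgnb i) * of_real sn else 0)"
definition dW :: "nat \<Rightarrow> complex" where "dW i = (if i < D then of_real cs else 1)"
definition W :: "complex mat" where "W = sp N pp dW oW"
definition Wt :: "complex mat" where "Wt = sp N pp dW (\<lambda>i. oW (pp i))"

lemma okW: "okf N pp oW" using pp_neq by (auto simp: okf_def oW_def)
lemma okWt: "okf N pp (\<lambda>i. oW (pp i))" using pp_neq by (auto simp: okf_def oW_def pp_def)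

lemma W_carrier[simp]: "W \<in> carrier_mat N N" "Wt \<in> carrier_mat N N"
  by (simp_all add: W_def Wt_def)

lemma cadj_W: "cadj W = Wt"
  unfolding W_def Wt_def cadj_sp[OF P]
  by (rule sp_cong) (auto simp: dW_def oW_def pp_def)

lemma W_Wt: "W * Wt = 1\<^sub>m N"
proof -
  have "W * Wt = sp N pp (\<lambda>i. dW i * dW i + oW i * oW (pp (pp i))) (\<lambda>i. dW i * oW (pp i) + oW i * dW (pp i))"
    unfolding W_def Wt_def by (rule sp_mult[OF P okW okWt])
  also have "\<dots> = sp N pp (\<lambda>_. 1) (\<lambda>_. 0)"
  proof (rule sp_cong)
    fix i assume "i < N"
    show "dW i * dW i + oW i * oW (pp (pp i)) = 1"
    proof (cases "i < D")
      case True
      have "dW i * dW i + oW i * oW (pp (pp i)) = of_real (cs^2 + sn^2 * (of_int (sgnb i))^2)"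
        using True by (simp add: dW_def oW_def pp_pp power2_eq_square)
      also have "\<dots> = 1"
      proof -
        have "(of_int (sgnb i) :: real)^2 = 1" using sgnb_cases[of i] by auto
        then show ?thesis using cssn by simp
      qed
      finally show ?thesis .
    qed (simp add: dW_def oW_def pp_def)
    show "dW i * oW (pp i) + oW i * dW (pp i) = 0"
    proof (cases "i < D")
      case True
      then show ?thesis using pp_lt[OF True] sgnb_pp[OF True] by (simp add: dW_def oW_def)
    qed (simp add: dW_def oW_def pp_def)
  qed
  finally show ?thesis by (simp add: one_sp[where p = pp])
qed

lemma Wt_W: "Wt * W = 1\<^sub>m N"
  using mat_mult_left_right_inverse[OF _ _ W_Wt] by simp

definition AA :: "complex mat" where "AA = dg N a"
definition PP :: "complex mat" where "PP = pm N sg"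
definition PPt :: "complex mat" where "PPt = pmt N sg"
definition BB :: "complex mat" where "BB = PP * Wt"

lemma sgN: "i < N \<Longrightarrow> sg i < N" using sg_N[OF DN] .
lemma sginj: "inj_on sg {0..<N}" using sg_inj[OF DN] .

lemma carr[simp]: "AA \<in> carrier_mat N N" "PP \<in> carrier_mat N N" "PPt \<in> carrier_mat N N" "BB \<in> carrier_mat N N"
  by (simp_all add: AA_def PP_def PPt_def BB_def mult_carrier_mat[of _ N N _ N])

lemma AA_unitary: "unitary_mat N AA"
proof -
  have "AA * cadj AA = 1\<^sub>m N"
  proof -
    have "AA * cadj AA = dg N (\<lambda>i. a i * cnj (a i))" by (simp add: AA_def cadj_dg dg_mult)
    also have "\<dots> = dg N (\<lambda>_. 1)"
      by (rule arg_cong[where f = "dg N"]) (auto simp: complex_mult_cnj cmod_power2[symmetric] simp del: cmod_power2)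
    also have "\<dots> = 1\<^sub>m N" by (rule eq_matI) (auto simp: dg_def)
    finally show ?thesis .
  qed
  moreover then have "cadj AA * AA = 1\<^sub>m N" using mat_mult_left_right_inverse[of AA N "cadj AA"] by simp
  ultimately show ?thesis by (simp add: unitary_mat_def)
qed

lemma cadj_Wt: "cadj Wt = W"
  unfolding cadj_W[symmetric] by (rule cadj_cadj[of W N N]) simp

lemma cadj_BB: "cadj BB = W * PPt"
  unfolding BB_def by (simp add: cadj_mult[of _ N N _ N] cadj_Wt cadj_pm PP_def PPt_def)

end



lemma okf_mult: "okf N p f \<Longrightarrow> okf N p (\<lambda>i. g i * f i)" by (simp add: okf_def)
lemma okf_mult2: "okf N p f \<Longrightarrow> okf N p (\<lambda>i. f i * g i)" by (simp add: okf_def)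
lemma okf_minus: "okf N p f \<Longrightarrow> okf N p g \<Longrightarrow> okf N p (\<lambda>i. f i - g i)" by (simp add: okf_def)

lemma sum_lt_D:
  fixes f :: "nat \<Rightarrow> real"
  assumes "D \<le> N" "\<And>i. D \<le> i \<Longrightarrow> i < N \<Longrightarrow> f i = 0"
  shows "(\<Sum>i<N. f i) = (\<Sum>i<D. f i)"
  by (rule sum.mono_neutral_right) (use assms in auto)

context cb2
begin

lemma assocN: "X \<in> carrier_mat N N \<Longrightarrow> Y \<in> carrier_mat N N \<Longrightarrow> Z \<in> carrier_mat N N \<Longrightarrow> X * Y * Z = X * (Y * Z)"
  by (rule assoc_mult_mat)

lemma mult_NN[simp]: "X \<in> carrier_mat N N \<Longrightarrow> Y \<in> carrier_mat N N \<Longrightarrow> X * Y \<in> carrier_mat N N"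
  by (rule mult_carrier_mat)

lemma BB_unitary: "unitary_mat N BB"
proof -
  have "cadj BB * BB = W * (PPt * (PP * Wt))" unfolding cadj_BB by (simp add: BB_def assocN)
  also have "PPt * (PP * Wt) = (PPt * PP) * Wt" by (simp add: assocN)
  also have "PPt * PP = 1\<^sub>m N" unfolding PPt_def PP_def by (rule pmt_pm[OF sgN sginj])
  finally have "cadj BB * BB = 1\<^sub>m N" using W_Wt left_mult_one_mat[OF W_carrier(2)] by simp
  moreover then have "BB * cadj BB = 1\<^sub>m N" using mat_mult_left_right_inverse[of "cadj BB" N BB] by simp
  ultimately show ?thesis by (simp add: unitary_mat_def)
qed

lemma inv_BB: "mat_inv BB = W * PPt"
proof -
  have "BB * cadj BB = 1\<^sub>m N" "cadj BB * BB = 1\<^sub>m N" using BB_unitary by (auto simp: unitary_mat_def)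
  then show ?thesis using mat_inv_eq[of BB N "cadj BB"] by (simp add: cadj_BB)
qed

lemma perm: "X \<in> carrier_mat N N \<Longrightarrow> PPt * (dg N f * (PP * X)) = dg N (\<lambda>i. f (sg i)) * X"
proof -
  assume X: "X \<in> carrier_mat N N"
  have "PPt * (dg N f * (PP * X)) = (PPt * dg N f * PP) * X" using X by (simp add: assocN)
  also have "PPt * dg N f * PP = dg N (\<lambda>i. f (sg i))" unfolding PPt_def PP_def by (rule pmt_dg_pm[OF sgN sginj])
  finally show ?thesis .
qed

definition dM :: "(nat \<Rightarrow> complex) \<Rightarrow> nat \<Rightarrow> complex" where
  "dM x i = (if i < D then of_real (cs^2) * x i + of_real (sn^2) * x (pp i) else x i)"
definition oM :: "(nat \<Rightarrow> complex) \<Rightarrow> nat \<Rightarrow> complex" where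
  "oM x i = (if i < D then of_int (sgnb i) * of_real (cs * sn) * (x (pp i) - x i) else 0)"

lemma okM: "okf N pp (oM x)" using pp_neq by (auto simp: okf_def oM_def)

lemma Wmid: "W * (dg N x * Wt) = sp N pp (dM x) (oM x)"
proof -
  have "W * (dg N x * Wt) = sp N pp dW oW * sp N pp (\<lambda>i. x i * dW i) (\<lambda>i. x i * oW (pp i))"
    unfolding W_def Wt_def by (simp add: dg_sp_mult[OF P okWt])
  also have "\<dots> = sp N pp (\<lambda>i. dW i * (x i * dW i) + oW i * (x (pp i) * oW (pp (pp i))))
     (\<lambda>i. dW i * (x i * oW (pp i)) + oW i * (x (pp i) * dW (pp i)))"
    by (rule sp_mult[OF P okW okf_mult[OF okWt]])
  also have "\<dots> = sp N pp (dM x) (oM x)"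
  proof (rule sp_cong)
    fix i assume "i < N"
    show "dW i * (x i * dW i) + oW i * (x (pp i) * oW (pp (pp i))) = dM x i"
    proof (cases "i < D")
      case True
      have s2: "(of_int (sgnb i) :: complex) * of_int (sgnb i) = 1" using sgnb_cases[of i] by auto
      have "dW i * (x i * dW i) + oW i * (x (pp i) * oW (pp (pp i))) =
            of_real cs * of_real cs * x i + (of_int (sgnb i) * of_int (sgnb i)) * (of_real sn * of_real sn) * x (pp i)"
        using True by (simp add: dW_def oW_def pp_pp algebra_simps)
      also have "\<dots> = dM x i" using True s2 by (simp add: dM_def power2_eq_square)
      finally show ?thesis .
    qed (simp add: dW_def oW_def dM_def pp_def)
    show "dW i * (x i * oW (pp i)) + oW i * (x (pp i) * dW (pp i)) = oM x i"
    proof (cases "i < D")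
      case True
      then show ?thesis using pp_lt[OF True] sgnb_pp[OF True]
        by (simp add: dW_def oW_def oM_def algebra_simps)
    qed (simp add: dW_def oW_def oM_def pp_def)
  qed
  finally show ?thesis .
qed

lemma X1_eq: "mat_inv BB * (AA * AA) * BB - AA * AA * AA = sp N pp (\<lambda>i. dM (\<lambda>i. a i ^ 3) i - a i ^ 3) (oM (\<lambda>i. a i ^ 3))"
proof -
  have AA2: "AA * AA = dg N (\<lambda>i. a i * a i)" by (simp add: AA_def dg_mult)
  have AA3: "AA * AA * AA = dg N (\<lambda>i. a i ^ 3)" by (simp add: AA2 AA_def dg_mult power3_eq_cube mult.assoc)
  have "mat_inv BB * (AA * AA) * BB = W * (PPt * (dg N (\<lambda>i. a i * a i) * (PP * Wt)))"
    unfolding inv_BB AA2 by (simp add: BB_def assocN)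
  also have "\<dots> = W * (dg N (\<lambda>i. a (sg i) * a (sg i)) * Wt)" by (simp add: perm)
  also have "(\<lambda>i. a (sg i) * a (sg i)) = (\<lambda>i. a i ^ 3)" using a_sg by (simp add: power2_eq_square)
  finally have "mat_inv BB * (AA * AA) * BB = sp N pp (dM (\<lambda>i. a i ^ 3)) (oM (\<lambda>i. a i ^ 3))" by (simp add: Wmid)
  then show ?thesis by (simp add: AA3 dg_sp[where p = pp] sp_minus)
qed

lemma frob_X1: "frob (mat_inv BB * (AA * AA) * BB - AA * AA * AA) = sqrt (\<Sum>i<D. sn^2 * (2 - 2 * cos (2 * pi / of_int q)))"
proof -
  have "frob (mat_inv BB * (AA * AA) * BB - AA * AA * AA) =
    sqrt (\<Sum>i<N. (cmod (dM (\<lambda>i. a i ^ 3) i - a i ^ 3))^2 + (cmod (oM (\<lambda>i. a i ^ 3) i))^2)"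
    unfolding X1_eq by (rule frob_sp[OF P okM])
  also have "(\<Sum>i<N. (cmod (dM (\<lambda>i. a i ^ 3) i - a i ^ 3))^2 + (cmod (oM (\<lambda>i. a i ^ 3) i))^2)
      = (\<Sum>i<D. (cmod (dM (\<lambda>i. a i ^ 3) i - a i ^ 3))^2 + (cmod (oM (\<lambda>i. a i ^ 3) i))^2)"
    by (rule sum_lt_D[OF DN]) (simp add: dM_def oM_def)
  also have "\<dots> = (\<Sum>i<D. sn^2 * (2 - 2 * cos (2 * pi / of_int q)))"
  proof (rule sum.cong[OF refl])
    fix i assume "i \<in> {..<D}"
    then have i: "i < D" by simp
    define z where "z = a (pp i) ^ 3 - a i ^ 3"
    have "dM (\<lambda>i. a i ^ 3) i - a i ^ 3 = of_real (sn^2) * z"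
    proof -
      have csq: "of_real (cs^2) = (1 - of_real (sn^2) :: complex)" using cssn
        by (metis add_diff_cancel_right' of_real_1 of_real_diff)
      have "dM (\<lambda>i. a i ^ 3) i - a i ^ 3 = of_real (cs^2) * a i ^ 3 + of_real (sn^2) * a (pp i) ^ 3 - a i ^ 3"
        using i by (simp add: dM_def)
      also have "\<dots> = (1 - of_real (sn^2)) * a i ^ 3 + of_real (sn^2) * a (pp i) ^ 3 - a i ^ 3"
        unfolding csq ..
      also have "\<dots> = of_real (sn^2) * z" by (simp add: z_def algebra_simps)
      finally show ?thesis .
    qed
    moreover have "oM (\<lambda>i. a i ^ 3) i = of_int (sgnb i) * of_real (cs * sn) * z" using i by (simp add: oM_def z_def)
    moreover have "cmod (of_int (sgnb i) :: complex) = 1" using sgnb_cases[of i] by auto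
    ultimately have "(cmod (dM (\<lambda>i. a i ^ 3) i - a i ^ 3))^2 + (cmod (oM (\<lambda>i. a i ^ 3) i))^2
        = sn^2 * (sn^2 + cs^2) * (cmod z)^2"
      by (simp add: norm_mult power_mult_distrib algebra_simps power2_eq_square)
    also have "\<dots> = sn^2 * (2 - 2 * cos (2 * pi / of_int q))" using cssn a3_pp[OF i] by (simp add: z_def)
    finally show "(cmod (dM (\<lambda>i. a i ^ 3) i - a i ^ 3))^2 + (cmod (oM (\<lambda>i. a i ^ 3) i))^2 = sn^2 * (2 - 2 * cos (2 * pi / of_int q))" .
  qed
  finally show ?thesis .
qed

lemma X2_eq: "AA * mat_inv BB * AA * BB - mat_inv BB * AA * BB * AA =
  sp N pp (\<lambda>i. a i * dM (\<lambda>i. a (sg i)) i - dM (\<lambda>i. a (sg i)) i * a i) (\<lambda>i. a i * oM (\<lambda>i. a (sg i)) i - oM (\<lambda>i. a (sg i)) i * a (pp i))"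
proof -
  have e1: "AA * mat_inv BB * AA * BB = AA * (W * (dg N (\<lambda>i. a (sg i)) * Wt))"
    unfolding inv_BB by (simp add: BB_def assocN perm AA_def)
  have "mat_inv BB * AA * BB * AA = W * (PPt * (AA * (PP * (Wt * AA))))"
    unfolding inv_BB by (simp add: BB_def assocN)
  also have "\<dots> = W * (dg N (\<lambda>i. a (sg i)) * (Wt * AA))" by (simp add: perm AA_def)
  also have "\<dots> = (W * (dg N (\<lambda>i. a (sg i)) * Wt)) * AA" by (simp add: assocN AA_def)
  finally have e2: "mat_inv BB * AA * BB * AA = (W * (dg N (\<lambda>i. a (sg i)) * Wt)) * AA" .
  show ?thesis unfolding e1 e2 unfolding Wmid AA_def
    by (simp add: sp_dg[OF P okM] dg_sp_mult[OF P okM] sp_minus)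
qed

lemma frob_X2: "frob (AA * mat_inv BB * AA * BB - mat_inv BB * AA * BB * AA) = sqrt (real D * (cs^2 * sn^2 * alpha * beta))"
proof -
  have ok: "okf N pp (\<lambda>i. a i * oM (\<lambda>i. a (sg i)) i - oM (\<lambda>i. a (sg i)) i * a (pp i))"
    by (intro okf_minus okf_mult okf_mult2 okM)
  have "frob (AA * mat_inv BB * AA * BB - mat_inv BB * AA * BB * AA) =
     sqrt (\<Sum>i<N. (cmod (a i * dM (\<lambda>i. a (sg i)) i - dM (\<lambda>i. a (sg i)) i * a i))^2 + (cmod (a i * oM (\<lambda>i. a (sg i)) i - oM (\<lambda>i. a (sg i)) i * a (pp i)))^2)"
    unfolding X2_eq by (rule frob_sp[OF P ok])
  also have "(\<Sum>i<N. (cmod (a i * dM (\<lambda>i. a (sg i)) i - dM (\<lambda>i. a (sg i)) i * a i))^2 + (cmod (a i * oM (\<lambda>i. a (sg i)) i - oM (\<lambda>i. a (sg i)) i * a (pp i)))^2)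
     = (\<Sum>i<D. (cmod (a i * dM (\<lambda>i. a (sg i)) i - dM (\<lambda>i. a (sg i)) i * a i))^2 + (cmod (a i * oM (\<lambda>i. a (sg i)) i - oM (\<lambda>i. a (sg i)) i * a (pp i)))^2)"
    by (rule sum_lt_D[OF DN]) (simp add: oM_def)
  also have "\<dots> = (\<Sum>i<D. cs^2 * sn^2 * alpha * beta)"
  proof (rule sum.cong[OF refl])
    fix i assume "i \<in> {..<D}"
    then have i: "i < D" by simp
    have "a i * oM (\<lambda>i. a (sg i)) i - oM (\<lambda>i. a (sg i)) i * a (pp i) =
       of_int (sgnb i) * of_real (cs * sn) * (a (sg (pp i)) - a (sg i)) * (a i - a (pp i))"
      using i by (simp add: oM_def algebra_simps)
    moreover have "cmod (of_int (sgnb i) :: complex) = 1" using sgnb_cases[of i] by auto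
    moreover have "(cmod (a i - a (pp i)))^2 = alpha" using a_pp[OF i] by (simp add: norm_minus_commute)
    ultimately have "(cmod (a i * oM (\<lambda>i. a (sg i)) i - oM (\<lambda>i. a (sg i)) i * a (pp i)))^2 = cs^2 * sn^2 * beta * alpha"
      using a_sg_pp[OF i] by (simp add: norm_mult power_mult_distrib)
    then show "(cmod (a i * dM (\<lambda>i. a (sg i)) i - dM (\<lambda>i. a (sg i)) i * a i))^2 + (cmod (a i * oM (\<lambda>i. a (sg i)) i - oM (\<lambda>i. a (sg i)) i * a (pp i)))^2 = cs^2 * sn^2 * alpha * beta"
      by (simp add: mult.commute)
  qed
  finally show ?thesis by simp
qed

end



lemma per_n:
  fixes L m :: nat
  assumes L5: "5 \<le> L" and up: "L * 2^L \<le> 6*m" and lo: "5*m \<le> 2*(L*2^L)"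
  shows "\<exists>A B. unitary_mat (6*m) A \<and> unitary_mat (6*m) B \<and>
     frob (mat_inv B * (A * A) * B - A * A * A) \<le> sqrt (real (L*2^L)) * 8 / (3^L - 2^L) \<and>
     frob (A * mat_inv B * A * B - mat_inv B * A * B * A) = sqrt (6 * real m)"
proof -
  interpret cb L using L5 by unfold_locales simp
  have Dd: "D = L * 2^L" by (simp add: D_def)
  have Dpos: "real D > 0" using L5 by (simp add: D_def)
  have al: "alpha \<ge> 2.8" "beta \<ge> 3.8" using alpha_ge[OF L5] beta_ge[OF L5] by auto
  define lam where "lam = 6 * real m / (real D * (alpha * beta))"
  have ab0: "alpha * beta \<ge> 2.8 * 3.8" using al by (intro mult_mono) auto
  have ab: "alpha * beta \<ge> 266/25" using ab0 by simp
  have dab: "real D * (alpha * beta) > 0" using Dpos al by (intro mult_pos_pos) auto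
  have lam0: "0 \<le> lam" unfolding lam_def using dab by (intro divide_nonneg_pos) auto
  have lam1: "4 * lam \<le> 1"
  proof -
    have "real D * (266/25) \<le> real D * (alpha * beta)" using ab Dpos by (intro mult_left_mono) auto
    moreover have "5 * m \<le> 2 * D" using lo Dd by simp
    then have "real (5 * m) \<le> real (2 * D)" by (simp only: of_nat_le_iff)
    then have "5 * real m \<le> 2 * real D" by simp
    ultimately have "24 * real m \<le> real D * (alpha * beta)" by linarith
    moreover have "4 * lam = (24 * real m) / (real D * (alpha * beta))" by (simp add: lam_def)
    ultimately show ?thesis using dab by (simp add: pos_divide_le_eq)
  qed
  define r where "r = sqrt (1 - 4 * lam)"
  have r0: "0 \<le> r" "r \<le> 1" using lam0 lam1 by (auto simp: r_def)
  have r2: "r^2 = 1 - 4 * lam" using lam1 by (simp add: r_def)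
  define cs where "cs = sqrt ((1 + r)/2)"
  define sn where "sn = sqrt ((1 - r)/2)"
  have cs2: "cs^2 = (1 + r)/2" using r0 by (simp add: cs_def)
  have sn2: "sn^2 = (1 - r)/2" using r0 by (simp add: sn_def)
  have cssn: "cs^2 + sn^2 = 1" using cs2 sn2 by simp
  have cs2sn2: "cs^2 * sn^2 = lam"
  proof -
    have "cs^2 * sn^2 = ((1 + r)/2) * ((1 - r)/2)" by (simp only: cs2 sn2)
    also have "\<dots> = (1 - r^2)/4" by (simp add: power2_eq_square algebra_simps)
    finally have "cs^2 * sn^2 = (1 - r^2)/4" .
    then show ?thesis using r2 by simp
  qed
  interpret cb2 L "6*m" cs sn using up cssn by unfold_locales (simp_all add: D_def)
  have "frob (AA * mat_inv BB * AA * BB - mat_inv BB * AA * BB * AA) = sqrt (6 * real m)"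
  proof -
    have "real D * (cs^2 * sn^2 * alpha * beta) = 6 * real m"
    proof -
      have "cs^2 * sn^2 * alpha * beta = lam * (alpha * beta)" using cs2sn2 by simp
      moreover have "real D \<noteq> 0" "alpha * beta \<noteq> 0" using dab Dpos by auto
      ultimately show ?thesis unfolding lam_def by (simp add: field_simps)
    qed
    then show ?thesis by (simp add: frob_X2)
  qed
  moreover have "frob (mat_inv BB * (AA * AA) * BB - AA * AA * AA) \<le> sqrt (real (L*2^L)) * 8 / (3^L - 2^L)"
  proof -
    have qr: "(of_int q :: real) = 3^L - 2^L" by (simp add: q_def)
    have qp: "(of_int q :: real) > 0" using q_pos by simp
    have c1: "0 \<le> 2 - 2 * cos (2 * pi / of_int q)" using cos_le_one[of "2 * pi / of_int q"] by simp
    have sn1: "sn^2 \<le> 1" using cssn by (smt (verit) zero_le_power2)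
    have "(\<Sum>i<D. sn^2 * (2 - 2 * cos (2 * pi / of_int q))) = real D * (sn^2 * (2 - 2 * cos (2 * pi / of_int q)))"
      by simp
    also have "\<dots> \<le> real D * (8 / of_int q)^2"
    proof (intro mult_left_mono)
      have "sn^2 * (2 - 2 * cos (2 * pi / of_int q)) \<le> 1 * (2 - 2 * cos (2 * pi / of_int q))"
        using sn1 c1 by (intro mult_right_mono) auto
      also have "\<dots> \<le> (8 / of_int q)^2" using a3_small[OF L5] by simp
      finally show "sn^2 * (2 - 2 * cos (2 * pi / of_int q)) \<le> (8 / of_int q)^2" .
    qed simp
    finally have "frob (mat_inv BB * (AA * AA) * BB - AA * AA * AA) \<le> sqrt (real D * (8 / of_int q)^2)"
      by (simp add: frob_X1)
    also have "\<dots> = sqrt (real D) * (8 / of_int q)" using qp by (simp add: real_sqrt_mult)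
    finally show ?thesis using qr Dd by simp
  qed
  ultimately show ?thesis using AA_unitary BB_unitary by blast
qed




lemma asym: "\<exists>L0. \<forall>L\<ge>L0. (real L)^3 * (8/9)^L \<le> 1/9"
proof -
  have "((\<lambda>L::nat. (real L)^3 * (8/9)^L) \<longlongrightarrow> 0) at_top" by real_asymp
  then have "eventually (\<lambda>L::nat. (real L)^3 * (8/9)^L < 1/9) at_top"
    by (rule order_tendstoD(2)) simp
  then show ?thesis unfolding eventually_at_top_linorder by (meson less_imp_le)
qed

lemma bound:
  fixes L m :: nat
  assumes L5: "5 \<le> L" and as: "(real L)^3 * (8/9)^L \<le> 1/9" and lo: "5*m \<le> 2*(L*2^L)" and m: "0 < m"
  shows "sqrt (real (L*2^L)) * 8 / (3^L - 2^L) \<le> 4 / real m"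
proof -
  define D where "D = real (L*2^L)"
  define Q :: real where "Q = 3^L - 2^L"
  have Dp: "D > 0" using L5 by (simp add: D_def)
  have LL: "L = Suc (L-1)" using L5 by simp
  have "(2::real)^(L-1) \<le> 3^(L-1)" by (intro power_mono) auto
  moreover have "Q = 3 * 3^(L-1) - 2 * 2^(L-1)" unfolding Q_def by (subst (1 2) LL) simp
  moreover have "(3::real)^L = 3 * 3^(L-1)" by (subst LL) simp
  ultimately have hQ: "(3::real)^L / 3 \<le> Q" by simp
  have Qp: "Q > 0" using hQ by (smt (verit) divide_pos_pos zero_less_power)
  have e8: "((2::real)^L)^3 = 8^L"
  proof -
    have "((2::real)^L)^3 = 2^(L*3)" by (simp only: power_mult)
    also have "\<dots> = (2^3)^L" by (simp only: mult.commute[of L 3] power_mult)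
    finally show ?thesis by simp
  qed
  have "D^3 = (real L)^3 * 8^L" unfolding D_def using e8 by (simp add: power_mult_distrib)
  also have "\<dots> = ((real L)^3 * (8/9)^L) * 9^L" by (simp add: power_divide)
  also have "\<dots> \<le> (1/9) * 9^L" using as by (intro mult_right_mono) auto
  also have "\<dots> = ((3::real)^L / 3)^2" by (simp add: power_divide power_mult[symmetric] mult.commute[of L 2] power_mult)
  also have "\<dots> \<le> Q^2" using hQ by (intro power_mono) auto
  finally have D3: "D^3 \<le> Q^2" .
  have "(sqrt D * D)^2 = D^3" using Dp by (simp add: power_mult_distrib power3_eq_cube power2_eq_square)
  then have "(sqrt D * D)^2 \<le> Q^2" using D3 by simp
  then have sDQ: "sqrt D * D \<le> Q" by (rule power2_le_imp_le) (use Qp in linarith)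
  have "sqrt D * 8 / Q \<le> 8 / D"
  proof -
    have "sqrt D * 8 / Q * D = 8 * (sqrt D * D) / Q" by simp
    also have "\<dots> \<le> 8 * Q / Q" using sDQ Qp by (intro divide_right_mono) auto
    also have "\<dots> = 8" using Qp by simp
    finally have "sqrt D * 8 / Q * D \<le> 8" .
    then show ?thesis using Dp by (simp add: le_divide_eq)
  qed
  also have "8 / D \<le> 4 / real m"
  proof -
    have "real (5*m) \<le> real (2*(L*2^L))" using lo by (simp only: of_nat_le_iff)
    then have "2 * real m \<le> D" by (simp add: D_def)
    then show ?thesis using Dp m by (simp add: divide_le_eq le_divide_eq)
  qed
  finally show ?thesis by (simp add: D_def Q_def)
qed

definition Lsel :: "nat \<Rightarrow> nat" where "Lsel n = Max {L. L * 2^L \<le> 6*n}"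

lemma Lsel_props: "Lsel n * 2^(Lsel n) \<le> 6*n \<and> (\<forall>L. L * 2^L \<le> 6*n \<longrightarrow> L \<le> Lsel n)"
proof -
  have fin: "finite {L. L * 2^L \<le> 6*n}"
  proof (rule finite_subset)
    show "{L. L * 2^L \<le> 6*n} \<subseteq> {..6*n}"
    proof
      fix L assume "L \<in> {L. L * 2^L \<le> 6*n}"
      then have "L * 2^L \<le> 6*n" by simp
      moreover have "L \<le> L * 2^L" by simp
      ultimately have "L \<le> 6*n" by (rule order_trans[rotated])
      then show "L \<in> {..6*n}" by simp
    qed
  qed simp
  have ne: "0 \<in> {L. L * 2^L \<le> 6*n}" by simp
  have ne2: "{L. L * 2^L \<le> 6*n} \<noteq> {}" using ne by blast
  have "Lsel n \<in> {L. L * 2^L \<le> 6*n}" unfolding Lsel_def by (rule Max_in[OF fin ne2])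
  moreover have "\<forall>L. L * 2^L \<le> 6*n \<longrightarrow> L \<le> Lsel n" unfolding Lsel_def using fin by auto
  ultimately show ?thesis by simp
qed

lemma Lsel_lo: assumes "5 \<le> Lsel n" shows "5 * n \<le> 2 * (Lsel n * 2^(Lsel n))"
proof -
  define L where "L = Lsel n"
  define P :: nat where "P = 2^L"
  define X where "X = L * P"
  have "\<not> (Suc L * 2^(Suc L) \<le> 6*n)" using Lsel_props[of n] unfolding L_def by (metis Suc_n_not_le_n)
  then have "6 * n < 2 * X + 2 * P" by (simp add: X_def P_def algebra_simps)
  moreover have "5 * P \<le> X" using assms unfolding X_def L_def by (intro mult_right_mono) auto
  ultimately have "5 * n < 2 * X" by linarith
  then show ?thesis by (simp add: X_def P_def L_def)
qed

lemma ultra_cofinite: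
  assumes U: "is_ultrafilter U" and np: "nonprincipal U"
  shows "eventually (\<lambda>n. N0 \<le> n) U"
proof (rule ccontr)
  assume "\<not> eventually (\<lambda>n. N0 \<le> n) U"
  moreover have "eventually (\<lambda>n. N0 \<le> n) U \<or> eventually (\<lambda>n. \<not> N0 \<le> n) U"
    using U unfolding is_ultrafilter_def by blast
  ultimately have "eventually (\<lambda>n. \<not> N0 \<le> n) U" by blast
  then have ev: "eventually (\<lambda>n. n < N0) U" by (rule eventually_mono) simp
  have "\<exists>m. eventually (\<lambda>n. n = m) U" if "eventually (\<lambda>n. n < k) U" for k
    using that
  proof (induction k)
    case 0
    then have "U = bot" by (simp add: eventually_False[symmetric])
    then show ?case using U by (simp add: is_ultrafilter_def)
  next
    case (Suc k)
    show ?case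
    proof (cases "eventually (\<lambda>n. n = k) U")
      case True then show ?thesis by blast
    next
      case False
      moreover have "eventually (\<lambda>n. n = k) U \<or> eventually (\<lambda>n. \<not> n = k) U"
        using U unfolding is_ultrafilter_def by blast
      ultimately have "eventually (\<lambda>n. \<not> n = k) U" by blast
      then have "eventually (\<lambda>n. n < k) U" using Suc.prems by eventually_elim auto
      then show ?thesis using Suc.IH by blast
    qed
  qed
  then obtain m where em: "eventually (\<lambda>n. n = m) U" using ev by blast
  have "U = principal {m}"
  proof (rule filter_eq_iff[THEN iffD2], intro allI iffI)
    fix P assume "eventually P U"
    show "eventually P (principal {m})"
    proof (rule ccontr)
      assume "\<not> eventually P (principal {m})"
      then have "\<not> P m" by (simp add: eventually_principal)
      have "eventually (\<lambda>n. False) U"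
        by (rule eventually_mono[OF eventually_conj[OF em \<open>eventually P U\<close>]]) (use \<open>\<not> P m\<close> in auto)
      then show False using U by (simp add: is_ultrafilter_def eventually_False)
    qed
  next
    fix P assume "eventually P (principal {m})"
    then have Pm: "P m" by (simp add: eventually_principal)
    show "eventually P U"
    proof (rule eventually_mono[OF em])
      fix x assume "x = m" then show "P x" using Pm by simp
    qed
  qed
  then show False using np by (simp add: nonprincipal_def)
qed

lemma cadj_one: "cadj (1\<^sub>m k) = 1\<^sub>m k"
  by (rule eq_matI) (auto simp: cadj_def)

lemma one_unitary: "unitary_mat k (1\<^sub>m k)"
  by (simp add: unitary_mat_def cadj_one)

theorem lemma2p4:
  fixes U :: "nat filter"
  assumes "is_ultrafilter U" and "nonprincipal U"
  shows "\<exists>A B :: nat \<Rightarrow> complex mat.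
     (\<forall>n. unitary_mat (6*n) (A n) \<and> unitary_mat (6*n) (B n)) \<and>
     bigO_U U (\<lambda>n. frob (mat_inv (B n) * (A n * A n) * B n - A n * A n * A n))
              (\<lambda>n. 1 / real n) \<and>
     bigO_U U (\<lambda>n. \<bar>frob (A n * mat_inv (B n) * A n * B n - mat_inv (B n) * A n * B n * A n)
                     - sqrt (6 * real n)\<bar>)
              (\<lambda>n. 1)"
proof -
  obtain L0 where L0: "\<forall>L\<ge>L0. (real L)^3 * (8/9)^L \<le> 1/9" using asym by blast
  define K where "K = max 5 L0"
  define N0 where "N0 = K * 2^K"
  have N0p: "1 \<le> N0" unfolding N0_def K_def by simp
  have good: "\<exists>A B. unitary_mat (6*n) A \<and> unitary_mat (6*n) B \<and>
      frob (mat_inv B * (A * A) * B - A * A * A) \<le> 4 / real n \<and>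
      frob (A * mat_inv B * A * B - mat_inv B * A * B * A) = sqrt (6 * real n)" if n: "N0 \<le> n" for n
  proof -
    define L where "L = Lsel n"
    have "K * 2^K \<le> 6 * n" using n unfolding N0_def by simp
    then have KL: "K \<le> L" using Lsel_props[of n] unfolding L_def by blast
    then have L5: "5 \<le> L" and LL0: "L0 \<le> L" unfolding K_def by auto
    have up: "L * 2^L \<le> 6*n" using Lsel_props[of n] unfolding L_def by blast
    have lo: "5*n \<le> 2*(L*2^L)" using Lsel_lo[of n] L5 unfolding L_def by blast
    obtain A B where AB: "unitary_mat (6*n) A" "unitary_mat (6*n) B"
      "frob (mat_inv B * (A * A) * B - A * A * A) \<le> sqrt (real (L*2^L)) * 8 / (3^L - 2^L)"
      "frob (A * mat_inv B * A * B - mat_inv B * A * B * A) = sqrt (6 * real n)"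
      using per_n[OF L5 up lo] by blast
    have "sqrt (real (L*2^L)) * 8 / (3^L - 2^L) \<le> 4 / real n"
      using bound[OF L5 _ lo] L0 LL0 n N0p by auto
    then have "frob (mat_inv B * (A * A) * B - A * A * A) \<le> 4 / real n" using AB(3) by linarith
    then show ?thesis using AB by blast
  qed
  have "\<forall>n. \<exists>A B. unitary_mat (6*n) A \<and> unitary_mat (6*n) B \<and> (N0 \<le> n \<longrightarrow>
      frob (mat_inv B * (A * A) * B - A * A * A) \<le> 4 / real n \<and>
      frob (A * mat_inv B * A * B - mat_inv B * A * B * A) = sqrt (6 * real n))"
  proof
    fix n show "\<exists>A B. unitary_mat (6*n) A \<and> unitary_mat (6*n) B \<and> (N0 \<le> n \<longrightarrow>
      frob (mat_inv B * (A * A) * B - A * A * A) \<le> 4 / real n \<and>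
      frob (A * mat_inv B * A * B - mat_inv B * A * B * A) = sqrt (6 * real n))"
    proof (cases "N0 \<le> n")
      case True then show ?thesis using good by blast
    next
      case False then show ?thesis using one_unitary by blast
    qed
  qed
  then obtain fA where "\<forall>n. \<exists>B. unitary_mat (6*n) (fA n) \<and> unitary_mat (6*n) B \<and> (N0 \<le> n \<longrightarrow>
      frob (mat_inv B * (fA n * fA n) * B - fA n * fA n * fA n) \<le> 4 / real n \<and>
      frob (fA n * mat_inv B * fA n * B - mat_inv B * fA n * B * fA n) = sqrt (6 * real n))"
    by metis
  then obtain fB where F: "\<And>n. unitary_mat (6*n) (fA n) \<and> unitary_mat (6*n) (fB n) \<and> (N0 \<le> n \<longrightarrow>
      frob (mat_inv (fB n) * (fA n * fA n) * fB n - fA n * fA n * fA n) \<le> 4 / real n \<and>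
      frob (fA n * mat_inv (fB n) * fA n * fB n - mat_inv (fB n) * fA n * fB n * fA n) = sqrt (6 * real n))"
    by metis
  have ev: "eventually (\<lambda>n. N0 \<le> n) U" by (rule ultra_cofinite[OF assms])
  have "bigO_U U (\<lambda>n. frob (mat_inv (fB n) * (fA n * fA n) * fB n - fA n * fA n * fA n)) (\<lambda>n. 1 / real n)"
    unfolding bigO_U_def
  proof (intro exI[of _ 4] conjI)
    show "eventually (\<lambda>n. frob (mat_inv (fB n) * (fA n * fA n) * fB n - fA n * fA n * fA n) \<le> 4 * (1 / real n)) U"
      using ev by eventually_elim (use F in simp)
  qed simp
  moreover have "bigO_U U (\<lambda>n. \<bar>frob (fA n * mat_inv (fB n) * fA n * fB n - mat_inv (fB n) * fA n * fB n * fA n)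
                     - sqrt (6 * real n)\<bar>) (\<lambda>n. 1)"
    unfolding bigO_U_def
  proof (intro exI[of _ 1] conjI)
    show "eventually (\<lambda>n. \<bar>frob (fA n * mat_inv (fB n) * fA n * fB n - mat_inv (fB n) * fA n * fB n * fA n)
                     - sqrt (6 * real n)\<bar> \<le> 1 * 1) U"
      using ev by eventually_elim (use F in simp)
  qed simp
  ultimately show ?thesis using F by blast
qed


end
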